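(* Let $P_a,P_b,P_c,P_d$ be $n$-qubit Pauli strings with $P_a,P_b$ anticommuting. For $u,v$ let $\alpha_{uv}\in\{0,1\}$ equal $1$ iff $P_u$ and $P_v$ anticommute. Define $\beta\in\{0,1\}$ by $\beta=1$ iff $(\alpha_{ac},\alpha_{bc})\neq(0,0)$, $(\alpha_{ad},\alpha_{bd})\neq(0,0)$ and $(\alpha_{ac},\alpha_{bc})\neq(\alpha_{ad},\alpha_{bd})$. Let $C'$ be any Clifford circuit and $q$ any qubit such that $C'P_aC'^\dagger$ and $C'P_bC'^\dagger$ act non-trivially only on qubit $q$, and write $C'P_xC'^\dagger=\lambda_x\,\tau_x\otimes R_x$ for $x\in\{c,d\}$ as the factor on qubit $q$ tensored with the factor on the other qubits. Then $R_c$ and $R_d$ anticommute if and only if $\alpha_{cd}\oplus\beta=1$ (equivalently, iff $(\alpha_{ac},\alpha_{bc},\alpha_{ad},\alpha_{bd},\alpha_{cd})$ is one of the 16 tuples $(0,0,0,0,1),(0,0,0,1,1),(0,0,1,0,1),(0,0,1,1,1),(0,1,0,0,1),(0,1,0,1,1),(0,1,1,0,0),(0,1,1,1,0),(1,0,0,0,1),(1,0,0,1,0),(1,0,1,0,1),(1,0,1,1,0),(1,1,0,0,1),(1,1,0,1,0),(1,1,1,0,0),(1,1,1,1,1)$). Moreover, in that case there exists a Clifford circuit $C$ and two qubits $q_1\neq q_2$ such that each of $CP_aC^\dagger, CP_bC^\dagger, CP_cC^\dagger, CP_dC^\dagger$ acts non-trivially only on qubits in $\{q_1,q_2\}$.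
   Context: An $n$-qubit Pauli string is $\lambda\,\sigma_1\otimes\cdots\otimes\sigma_n$ with $\sigma_i\in\{I,X,Y,Z\}$, $\lambda\in\{\pm1,\pm i\}$; it acts non-trivially on qubit $i$ if $\sigma_i\neq I$. A Clifford circuit is a unitary generated by $H$, $S$, CNOT; conjugation by it maps Pauli strings to Pauli strings and preserves commutation relations. $\oplus$ denotes XOR. (Standard fact available: any two anticommuting Pauli strings can be simultaneously conjugated by some Clifford circuit to act non-trivially on a single common qubit, and $n\ge 2$ is assumed.) *)

theory Defs
  imports Main
begin

datatype pauli1 = PI | PX | PY | PZ

text \<open>Product of single-qubit Paulis: mult1 s t = (k, u) means s t = i^k u.\<close>
fun mult1 :: "pauli1 \<Rightarrow> pauli1 \<Rightarrow> nat \<times> pauli1" where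
  "mult1 PI t = (0, t)"
| "mult1 s PI = (0, s)"
| "mult1 PX PX = (0, PI)" | "mult1 PY PY = (0, PI)" | "mult1 PZ PZ = (0, PI)"
| "mult1 PX PY = (1, PZ)" | "mult1 PY PX = (3, PZ)"
| "mult1 PY PZ = (1, PX)" | "mult1 PZ PY = (3, PX)"
| "mult1 PZ PX = (1, PY)" | "mult1 PX PZ = (3, PY)"

text \<open>A Pauli string i^(ph) * op 0 \<otimes> ... \<otimes> op (n-1); the phase lambda = i^ph.\<close>
record pstring =
  ph :: nat
  op :: "nat \<Rightarrow> pauli1"

definition valid_pstring :: "nat \<Rightarrow> pstring \<Rightarrow> bool" where
  "valid_pstring n P \<longleftrightarrow> (\<forall>j\<ge>n. op P j = PI)"

definition pmult :: "nat \<Rightarrow> pstring \<Rightarrow> pstring \<Rightarrow> pstring" where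
  "pmult n P Q =
     \<lparr> ph = (ph P + ph Q + (\<Sum>j<n. fst (mult1 (op P j) (op Q j)))) mod 4,
       op = (\<lambda>j. snd (mult1 (op P j) (op Q j))) \<rparr>"

definition pneg :: "pstring \<Rightarrow> pstring" where
  "pneg P = P\<lparr> ph := (ph P + 2) mod 4 \<rparr>"

definition anticommute :: "nat \<Rightarrow> pstring \<Rightarrow> pstring \<Rightarrow> bool" where
  "anticommute n P Q \<longleftrightarrow> pmult n P Q = pneg (pmult n Q P)"

definition supported_in :: "nat \<Rightarrow> pstring \<Rightarrow> nat set \<Rightarrow> bool" where
  "supported_in n P A \<longleftrightarrow> (\<forall>j<n. op P j \<noteq> PI \<longrightarrow> j \<in> A)"

text \<open>The factor R of P = lambda tau \<otimes> R on the qubits other than q,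
  represented as the n-qubit string I_q \<otimes> R (phase absorbed into lambda).\<close>
definition rest_off :: "nat \<Rightarrow> pstring \<Rightarrow> pstring" where
  "rest_off q P = \<lparr> ph = 0, op = (op P)(q := PI) \<rparr>"

datatype gate = H nat | S nat | CNOT nat nat

type_synonym circuit = "gate list"

definition circuit_on :: "nat \<Rightarrow> circuit \<Rightarrow> bool" where
  "circuit_on n C \<longleftrightarrow> (\<forall>g\<in>set C. case g of
      H j \<Rightarrow> j < n | S j \<Rightarrow> j < n | CNOT a b \<Rightarrow> a < n \<and> b < n \<and> a \<noteq> b)"

text \<open>H s H^dagger = i^k s'\<close>
fun hconj :: "pauli1 \<Rightarrow> nat \<times> pauli1" where
  "hconj PI = (0, PI)" | "hconj PX = (0, PZ)" | "hconj PZ = (0, PX)" | "hconj PY = (2, PY)"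

text \<open>S s S^dagger = i^k s'\<close>
fun sconj :: "pauli1 \<Rightarrow> nat \<times> pauli1" where
  "sconj PI = (0, PI)" | "sconj PX = (0, PY)" | "sconj PY = (2, PX)" | "sconj PZ = (0, PZ)"

text \<open>CNOT (s \<otimes> t) CNOT^dagger = i^k (s' \<otimes> t'), control first.\<close>
fun cnotconj :: "pauli1 \<Rightarrow> pauli1 \<Rightarrow> nat \<times> pauli1 \<times> pauli1" where
  "cnotconj PI PI = (0, PI, PI)" | "cnotconj PI PX = (0, PI, PX)"
| "cnotconj PI PY = (0, PZ, PY)" | "cnotconj PI PZ = (0, PZ, PZ)"
| "cnotconj PX PI = (0, PX, PX)" | "cnotconj PX PX = (0, PX, PI)"
| "cnotconj PX PY = (0, PY, PZ)" | "cnotconj PX PZ = (2, PY, PY)"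
| "cnotconj PY PI = (0, PY, PX)" | "cnotconj PY PX = (0, PY, PI)"
| "cnotconj PY PY = (2, PX, PZ)" | "cnotconj PY PZ = (0, PX, PY)"
| "cnotconj PZ PI = (0, PZ, PI)" | "cnotconj PZ PX = (0, PZ, PX)"
| "cnotconj PZ PY = (0, PI, PY)" | "cnotconj PZ PZ = (0, PI, PZ)"

fun conj_gate :: "gate \<Rightarrow> pstring \<Rightarrow> pstring" where
  "conj_gate (H j) P = (case hconj (op P j) of (k, s) \<Rightarrow>
       \<lparr> ph = (ph P + k) mod 4, op = (op P)(j := s) \<rparr>)"
| "conj_gate (S j) P = (case sconj (op P j) of (k, s) \<Rightarrow>
       \<lparr> ph = (ph P + k) mod 4, op = (op P)(j := s) \<rparr>)"
| "conj_gate (CNOT a b) P = (case cnotconj (op P a) (op P b) of (k, s, t) \<Rightarrow>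
       \<lparr> ph = (ph P + k) mod 4, op = (op P)(a := s, b := t) \<rparr>)"

text \<open>Conjugation C P C^dagger by the circuit C = g_m ... g_1 given as [g_1, ..., g_m]
  (g_1 applied first).\<close>
definition conj_circ :: "circuit \<Rightarrow> pstring \<Rightarrow> pstring" where
  "conj_circ C P = fold conj_gate C P"

definition b2n :: "bool \<Rightarrow> nat" where
  "b2n b = (if b then 1 else 0)"

end

theory Submission imports Defs begin

definition ac1 :: "pauli1 \<Rightarrow> pauli1 \<Rightarrow> bool" where
  "ac1 s t \<longleftrightarrow> s \<noteq> PI \<and> t \<noteq> PI \<and> s \<noteq> t"

definition acs :: "nat set \<Rightarrow> pstring \<Rightarrow> pstring \<Rightarrow> nat" where
  "acs T P Q = (\<Sum>j\<in>T. b2n (ac1 (op P j) (op Q j)))"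

lemma mult1_ph: "fst (mult1 s t) mod 4 = (fst (mult1 t s) + 2 * b2n (ac1 s t)) mod 4"
  by (cases s; cases t; simp add: ac1_def b2n_def)

lemma mult1_snd: "snd (mult1 s t) = snd (mult1 t s)"
  by (cases s; cases t; simp)

lemma aux0: "((Z::nat) + 2*c) mod 4 = (Z + 2) mod 4 \<longleftrightarrow> odd c"
proof -
  have "(Z + 2*c) mod 4 = (Z + 2*(c mod 2)) mod 4"
  proof -
    have "Z + 2*c = (Z + 2*(c mod 2)) + 4 * (c div 2)" by presburger
    then show ?thesis by (metis mod_mult_self2)
  qed
  moreover have "c mod 2 = 0 \<or> c mod 2 = 1" by auto
  moreover have "(Z + 0) mod 4 \<noteq> (Z + 2) mod 4" by presburger
  ultimately show ?thesis by (auto simp: odd_iff_mod_2_eq_one)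
qed

lemma aux4: "(X::nat) mod 4 = (Y + 2*c) mod 4 \<Longrightarrow>
   ((a + b + X) mod 4 = ((b + a + Y) mod 4 + 2) mod 4) \<longleftrightarrow> odd c"
proof -
  assume h: "X mod 4 = (Y + 2*c) mod 4"
  have "(a + b + X) mod 4 = (a + b + Y + 2*c) mod 4"
    by (metis h add.assoc mod_add_right_eq)
  moreover have "((b + a + Y) mod 4 + 2) mod 4 = (a + b + Y + 2) mod 4"
    by (metis mod_add_left_eq add.commute)
  ultimately show ?thesis using aux0[of "a+b+Y" c] by simp
qed

lemma anticommute_iff: "anticommute n P Q \<longleftrightarrow> odd (acs {..<n} P Q)"
proof -
  let ?f = "\<lambda>j. fst (mult1 (op P j) (op Q j))"
  let ?g = "\<lambda>j. fst (mult1 (op Q j) (op P j))"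
  let ?b = "\<lambda>j. b2n (ac1 (op P j) (op Q j))"
  have "sum ?f {..<n} mod 4 = (\<Sum>j<n. ?f j mod 4) mod 4" by (simp add: mod_sum_eq)
  also have "\<dots> = (\<Sum>j<n. (?g j + 2 * ?b j) mod 4) mod 4" using mult1_ph by simp
  also have "\<dots> = (\<Sum>j<n. (?g j + 2 * ?b j)) mod 4" by (simp add: mod_sum_eq)
  also have "\<dots> = (sum ?g {..<n} + 2 * acs {..<n} P Q) mod 4"
    by (simp add: acs_def sum.distrib sum_distrib_left)
  finally have s: "sum ?f {..<n} mod 4 = (sum ?g {..<n} + 2 * acs {..<n} P Q) mod 4" .
  have o: "(\<lambda>j. snd (mult1 (op P j) (op Q j))) = (\<lambda>j. snd (mult1 (op Q j) (op P j)))"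
    using mult1_snd by auto
  show ?thesis
    unfolding anticommute_def pmult_def pneg_def
    using aux4[OF s, of "ph P" "ph Q"] o by simp
qed

lemma op_H: "op (conj_gate (H j) P) = (op P)(j := snd (hconj (op P j)))"
  by (simp split: prod.split)
lemma op_S: "op (conj_gate (S j) P) = (op P)(j := snd (sconj (op P j)))"
  by (simp split: prod.split)
lemma op_CNOT: "op (conj_gate (CNOT a b) P) = (op P)(a := fst (snd (cnotconj (op P a) (op P b))),
   b := snd (snd (cnotconj (op P a) (op P b))))"
  by (simp split: prod.split)

declare conj_gate.simps[simp del]

lemma cc_Nil[simp]: "conj_circ [] P = P" by (simp add: conj_circ_def)
lemma cc_Cons[simp]: "conj_circ (g # C) P = conj_circ C (conj_gate g P)" by (simp add: conj_circ_def)
lemma cc_append[simp]: "conj_circ (C1 @ C2) P = conj_circ C2 (conj_circ C1 P)" by (simp add: conj_circ_def)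

fun gok :: "nat set \<Rightarrow> gate \<Rightarrow> bool" where
  "gok T (H j) = (j \<in> T)" | "gok T (S j) = (j \<in> T)"
| "gok T (CNOT a b) = (a \<in> T \<and> b \<in> T \<and> a \<noteq> b)"

definition cin :: "nat set \<Rightarrow> circuit \<Rightarrow> bool" where
  "cin T C \<longleftrightarrow> (\<forall>g\<in>set C. gok T g)"

lemma cin_Nil[simp]: "cin T []" by (simp add: cin_def)
lemma cin_Cons[simp]: "cin T (g # C) \<longleftrightarrow> gok T g \<and> cin T C" by (simp add: cin_def)
lemma cin_append[simp]: "cin T (C1 @ C2) \<longleftrightarrow> cin T C1 \<and> cin T C2" by (auto simp add: cin_def)
lemma gok_mono: "gok T g \<Longrightarrow> T \<subseteq> U \<Longrightarrow> gok U g"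
  by (cases g) auto
lemma cin_mono: "cin T C \<Longrightarrow> T \<subseteq> U \<Longrightarrow> cin U C"
  using gok_mono by (auto simp: cin_def)
lemma circuit_on_cin: "circuit_on n C = cin {..<n} C"
proof -
  have "(case g of H j \<Rightarrow> j < n | S j \<Rightarrow> j < n | CNOT a b \<Rightarrow> a < n \<and> b < n \<and> a \<noteq> b)
     = gok {..<n} g" for g by (cases g) auto
  then show ?thesis unfolding circuit_on_def cin_def by simp
qed

lemma op_out: "cin T C \<Longrightarrow> j \<notin> T \<Longrightarrow> op (conj_circ C P) j = op P j"
proof (induction C arbitrary: P)
  case Nil then show ?case by simp
next
  case (Cons g C)
  then have "op (conj_gate g P) j = op P j"
    by (cases g) (auto simp: op_H op_S op_CNOT)
  with Cons show ?case by simp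
qed

lemma op_triv: "cin T C \<Longrightarrow> \<forall>j\<in>T. op P j = PI \<Longrightarrow> op (conj_circ C P) = op P"
proof (induction C arbitrary: P)
  case Nil then show ?case by simp
next
  case (Cons g C)
  then have e: "op (conj_gate g P) = op P"
    by (cases g) (auto simp: op_H op_S op_CNOT fun_eq_iff)
  have "op (conj_circ C (conj_gate g P)) = op (conj_gate g P)"
    using Cons e by simp
  with e show ?case by simp
qed

lemma ac1_h: "ac1 (snd (hconj s)) (snd (hconj t)) = ac1 s t"
  by (cases s; cases t; simp add: ac1_def)
lemma ac1_s: "ac1 (snd (sconj s)) (snd (sconj t)) = ac1 s t"
  by (cases s; cases t; simp add: ac1_def)
lemma ac1_cnot: "(ac1 (fst (snd (cnotconj s t))) (fst (snd (cnotconj u v))) \<noteq>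
     ac1 (snd (snd (cnotconj s t))) (snd (snd (cnotconj u v)))) = (ac1 s u \<noteq> ac1 t v)"
  by (cases s; cases t; cases u; cases v; simp add: ac1_def)

lemma odd_b2n: "odd (b2n p + b2n r + R) = ((p \<noteq> r) \<noteq> odd R)"
  by (simp add: b2n_def)

lemma acs_gate: "finite T \<Longrightarrow> gok T g \<Longrightarrow>
   odd (acs T (conj_gate g P) (conj_gate g Q)) = odd (acs T P Q)"
proof (cases g)
  case (H j)
  assume "gok T g"
  show ?thesis unfolding H acs_def
    by (rule arg_cong[where f=odd], rule sum.cong) (auto simp: op_H ac1_h)
next
  case (S j)
  show ?thesis unfolding S acs_def
    by (rule arg_cong[where f=odd], rule sum.cong) (auto simp: op_S ac1_s)
next
  case (CNOT a b)
  assume fin: "finite T" and c: "gok T g"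
  then have ab: "a \<in> T" "b \<in> T" "a \<noteq> b" using CNOT by auto
  have spl: "sum f T = f a + f b + sum f (T - {a} - {b})" for f :: "nat \<Rightarrow> nat"
  proof -
    have "sum f T = f a + sum f (T - {a})" using fin ab by (simp add: sum.remove)
    also have "sum f (T - {a}) = f b + sum f (T - {a} - {b})" using fin ab by (simp add: sum.remove)
    finally show ?thesis by simp
  qed
  let ?P = "conj_gate (CNOT a b) P" and ?Q = "conj_gate (CNOT a b) Q"
  have r: "(\<Sum>j\<in>T - {a} - {b}. b2n (ac1 (op ?P j) (op ?Q j))) =
           (\<Sum>j\<in>T - {a} - {b}. b2n (ac1 (op P j) (op Q j)))"
    by (rule sum.cong) (auto simp: op_CNOT)
  have A: "odd (acs T ?P ?Q) = ((ac1 (op ?P a) (op ?Q a) \<noteq> ac1 (op ?P b) (op ?Q b)) \<noteq>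
      odd (\<Sum>j\<in>T - {a} - {b}. b2n (ac1 (op ?P j) (op ?Q j))))"
    by (simp only: acs_def spl odd_b2n)
  have B: "odd (acs T P Q) = ((ac1 (op P a) (op Q a) \<noteq> ac1 (op P b) (op Q b)) \<noteq>
      odd (\<Sum>j\<in>T - {a} - {b}. b2n (ac1 (op P j) (op Q j))))"
    by (simp only: acs_def spl odd_b2n)
  have C: "(ac1 (op ?P a) (op ?Q a) \<noteq> ac1 (op ?P b) (op ?Q b)) =
      (ac1 (op P a) (op Q a) \<noteq> ac1 (op P b) (op Q b))"
    using ab ac1_cnot[of "op P a" "op P b" "op Q a" "op Q b"] by (simp add: op_CNOT)
  show ?thesis unfolding CNOT by (simp only: A B C r)
qed

lemma acs_circ: "finite T \<Longrightarrow> cin T C \<Longrightarrow>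
   odd (acs T (conj_circ C P) (conj_circ C Q)) = odd (acs T P Q)"
proof (induction C arbitrary: P Q)
  case Nil then show ?case by simp
next
  case (Cons g C)
  then show ?case using acs_gate[of T g P Q] by simp
qed


lemma toZ: "op P j \<noteq> PI \<Longrightarrow> \<exists>L. cin {j} L \<and> op (conj_circ L P) = (op P)(j := PZ)"
proof (cases "op P j")
  case PX then show ?thesis by (intro exI[of _ "[H j]"]) (simp add: op_H)
next
  case PY then show ?thesis by (intro exI[of _ "[S j, H j]"]) (simp add: op_H op_S)
next
  case PZ then show ?thesis by (intro exI[of _ "[]"]) auto
qed auto

lemma toX: "op P j \<noteq> PI \<Longrightarrow> \<exists>L. cin {j} L \<and> op (conj_circ L P) = (op P)(j := PX)"
proof (cases "op P j")
  case PX then show ?thesis by (intro exI[of _ "[]"]) auto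
next
  case PY then show ?thesis by (intro exI[of _ "[S j]"]) (simp add: op_S)
next
  case PZ then show ?thesis by (intro exI[of _ "[H j]"]) (simp add: op_H)
qed auto

lemma acs_single: "finite T \<Longrightarrow> k \<in> T \<Longrightarrow> \<forall>j\<in>T-{k}. op A j = PI \<Longrightarrow>
   acs T A B = b2n (ac1 (op A k) (op B k))"
proof -
  assume fin: "finite T" and k: "k \<in> T" and z: "\<forall>j\<in>T-{k}. op A j = PI"
  have "acs T A B = b2n (ac1 (op A k) (op B k)) + (\<Sum>j\<in>T-{k}. b2n (ac1 (op A j) (op B j)))"
    unfolding acs_def using fin k by (simp add: sum.remove)
  also have "(\<Sum>j\<in>T-{k}. b2n (ac1 (op A j) (op B j))) = 0"
    using z by (simp add: ac1_def b2n_def)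
  finally show ?thesis by simp
qed

lemma phase1: "card {j\<in>T-{k}. op A j \<noteq> PI} = m \<Longrightarrow> finite T \<Longrightarrow> k \<in> T \<Longrightarrow> op A k = PZ \<Longrightarrow>
  \<exists>C. cin T C \<and> op (conj_circ C A) k = PZ \<and> (\<forall>j\<in>T-{k}. op (conj_circ C A) j = PI)"
proof (induction m arbitrary: A rule: less_induct)
  case (less m)
  show ?case
  proof (cases "{j\<in>T-{k}. op A j \<noteq> PI} = {}")
    case True then show ?thesis using less.prems by (intro exI[of _ "[]"]) auto
  next
    case False
    then obtain j where j: "j \<in> T" "j \<noteq> k" "op A j \<noteq> PI" by auto
    obtain L where L: "cin {j} L" "op (conj_circ L A) = (op A)(j := PZ)" using toZ[OF j(3)] by blast
    define A2 where "A2 = conj_gate (CNOT j k) (conj_circ L A)"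
    have oA2: "op A2 = (op A)(j := PI)" using j less.prems
      by (auto simp add: A2_def op_CNOT L(2) fun_eq_iff)
    have eq: "{i\<in>T-{k}. op A2 i \<noteq> PI} = {i\<in>T-{k}. op A i \<noteq> PI} - {j}" by (auto simp: oA2)
    have "card {i\<in>T-{k}. op A2 i \<noteq> PI} < m"
      unfolding eq less.prems(1)[symmetric] using j less.prems(2)
      by (intro card_Diff1_less) auto
    from less.IH[OF this refl less.prems(2,3)] obtain C2 where
      C2: "cin T C2" "op (conj_circ C2 A2) k = PZ" "\<forall>j\<in>T-{k}. op (conj_circ C2 A2) j = PI"
      using oA2 j less.prems by auto
    show ?thesis
      apply (intro exI[of _ "L @ CNOT j k # C2"])
      using C2 L(1) j less.prems cin_mono[OF L(1), of T] by (simp add: A2_def[symmetric])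
  qed
qed

lemma phase2: "card {j\<in>T-{k}. op B j \<noteq> PI} = m \<Longrightarrow> finite T \<Longrightarrow> k \<in> T \<Longrightarrow> op A k = PZ \<Longrightarrow>
  \<forall>j\<in>T-{k}. op A j = PI \<Longrightarrow> op B k = PX \<or> op B k = PY \<Longrightarrow>
  \<exists>C. cin T C \<and> op (conj_circ C A) = op A \<and> (op (conj_circ C B) k = PX \<or> op (conj_circ C B) k = PY)
     \<and> (\<forall>j\<in>T-{k}. op (conj_circ C B) j = PI)"
proof (induction m arbitrary: A B rule: less_induct)
  case (less m)
  show ?case
  proof (cases "{j\<in>T-{k}. op B j \<noteq> PI} = {}")
    case True then show ?thesis using less.prems by (intro exI[of _ "[]"]) auto
  next
    case False
    then obtain j where j: "j \<in> T" "j \<noteq> k" "op B j \<noteq> PI" by auto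
    obtain L where L: "cin {j} L" "op (conj_circ L B) = (op B)(j := PX)" using toX[OF j(3)] by blast
    have LA: "op (conj_circ L A) = op A" using op_triv[OF L(1)] j less.prems by auto
    define A2 where "A2 = conj_gate (CNOT k j) (conj_circ L A)"
    define B2 where "B2 = conj_gate (CNOT k j) (conj_circ L B)"
    have oA2: "op A2 = op A" using j less.prems
      by (auto simp add: A2_def op_CNOT LA fun_eq_iff)
    have oB2: "op B2 = (op B)(j := PI)" using j less.prems(6)
      by (auto simp add: B2_def op_CNOT L(2) fun_eq_iff)
    have eq: "{i\<in>T-{k}. op B2 i \<noteq> PI} = {i\<in>T-{k}. op B i \<noteq> PI} - {j}" by (auto simp: oB2)
    have cl: "card {i\<in>T-{k}. op B2 i \<noteq> PI} < m"
      unfolding eq less.prems(1)[symmetric] using j less.prems(2)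
      by (intro card_Diff1_less) auto
    have "\<exists>C. cin T C \<and> op (conj_circ C A2) = op A2 \<and>
        (op (conj_circ C B2) k = PX \<or> op (conj_circ C B2) k = PY) \<and>
        (\<forall>j\<in>T-{k}. op (conj_circ C B2) j = PI)"
      by (rule less.IH[OF cl refl less.prems(2,3)]) (use oA2 oB2 j less.prems in auto)
    then obtain C2 where
      C2: "cin T C2" "op (conj_circ C2 A2) = op A2"
        "op (conj_circ C2 B2) k = PX \<or> op (conj_circ C2 B2) k = PY"
        "\<forall>j\<in>T-{k}. op (conj_circ C2 B2) j = PI" by blast
    show ?thesis
      apply (intro exI[of _ "L @ CNOT k j # C2"])
      using C2 L(1) j less.prems cin_mono[OF L(1), of T] oA2
      by (simp add: A2_def[symmetric] B2_def[symmetric])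
  qed
qed

lemma reduce: "finite T \<Longrightarrow> odd (acs T A B) \<Longrightarrow>
  \<exists>C k. cin T C \<and> k \<in> T \<and> (\<forall>j\<in>T-{k}. op (conj_circ C A) j = PI \<and> op (conj_circ C B) j = PI)"
proof -
  assume fin: "finite T" and od: "odd (acs T A B)"
  obtain k where k: "k \<in> T" "ac1 (op A k) (op B k)"
  proof (rule ccontr)
    assume "\<not> thesis"
    then have "\<forall>k\<in>T. \<not> ac1 (op A k) (op B k)" using that by blast
    then have "acs T A B = 0" by (simp add: acs_def b2n_def)
    with od show False by simp
  qed
  then have "op A k \<noteq> PI" by (simp add: ac1_def)
  from toZ[OF this] obtain L0 where L0: "cin {k} L0" "op (conj_circ L0 A) = (op A)(k := PZ)" by blast
  have L0T: "cin T L0" using cin_mono[OF L0(1)] k by auto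
  define A0 where "A0 = conj_circ L0 A"
  define B0 where "B0 = conj_circ L0 B"
  have "op A0 k = PZ" using L0 by (simp add: A0_def)
  from phase1[OF refl fin k(1) this] obtain C1 where
    C1: "cin T C1" "op (conj_circ C1 A0) k = PZ" "\<forall>j\<in>T-{k}. op (conj_circ C1 A0) j = PI" by blast
  define A1 where "A1 = conj_circ C1 A0"
  define B1 where "B1 = conj_circ C1 B0"
  have "odd (acs T A1 B1)" unfolding A1_def B1_def A0_def B0_def
    using acs_circ[OF fin C1(1)] acs_circ[OF fin L0T] od by simp
  moreover have "acs T A1 B1 = b2n (ac1 (op A1 k) (op B1 k))"
    using acs_single[OF fin k(1)] C1 unfolding A1_def by blast
  ultimately have "ac1 PZ (op B1 k)" using C1(2) unfolding A1_def by (simp add: b2n_def split: if_splits)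
  then have "op B1 k = PX \<or> op B1 k = PY" by (cases "op B1 k") (auto simp: ac1_def)
  from phase2[OF refl fin k(1) C1(2)[folded A1_def] C1(3)[folded A1_def] this] obtain C2 where
    C2: "cin T C2" "op (conj_circ C2 A1) = op A1" "\<forall>j\<in>T-{k}. op (conj_circ C2 B1) j = PI" by blast
  show ?thesis
    apply (intro exI[of _ "L0 @ C1 @ C2"] exI[of _ k])
    using L0T C1 C2 k(1) unfolding A1_def B1_def A0_def B0_def by simp
qed


lemma bool_fact: "ac1 ta tb \<Longrightarrow> (r \<Longrightarrow> E) \<Longrightarrow>
  (let aac = ac1 ta tc; abc = ac1 tb tc; aad = ac1 ta td; abd = ac1 tb td;
         acd = (ac1 tc td \<noteq> r);
         beta = ((aac, abc) \<noteq> (False, False) \<and> (aad, abd) \<noteq> (False, False)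
                 \<and> (aac, abc) \<noteq> (aad, abd))
     in (r \<longleftrightarrow> (acd \<noteq> beta))
      \<and> ((acd \<noteq> beta) \<longleftrightarrow>
           (b2n aac, b2n abc, b2n aad, b2n abd, b2n acd) \<in>
             {(0,0,0,0,1),(0,0,0,1,1),(0,0,1,0,1),(0,0,1,1,1),(0,1,0,0,1),(0,1,0,1,1),
              (0,1,1,0,0),(0,1,1,1,0),(1,0,0,0,1),(1,0,0,1,0),(1,0,1,0,1),(1,0,1,1,0),
              (1,1,0,0,1),(1,1,0,1,0),(1,1,1,0,0),(1,1,1,1,1)})
      \<and> ((acd \<noteq> beta) \<longrightarrow> E))"
  by (cases ta; cases tb; cases tc; cases td; cases r; simp add: ac1_def b2n_def Let_def)

lemma acs_split: "q < n \<Longrightarrow> acs {..<n} X Y = b2n (ac1 (op X q) (op Y q)) + acs ({..<n} - {q}) X Y"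
  unfolding acs_def by (simp add: sum.remove)

lemma acs_rest: "q < n \<Longrightarrow> acs {..<n} (rest_off q X) (rest_off q Y) = acs ({..<n} - {q}) X Y"
proof -
  assume q: "q < n"
  have "acs {..<n} (rest_off q X) (rest_off q Y) = acs ({..<n} - {q}) (rest_off q X) (rest_off q Y)"
    using acs_split[OF q] by (simp add: rest_off_def ac1_def b2n_def)
  also have "\<dots> = acs ({..<n} - {q}) X Y"
    unfolding acs_def by (rule sum.cong) (auto simp: rest_off_def)
  finally show ?thesis .
qed

theorem mainTheorem5:
  fixes n q :: nat and Pa Pb Pc Pd :: pstring and C' :: circuit
  assumes "n \<ge> 2"
    and "valid_pstring n Pa" "valid_pstring n Pb" "valid_pstring n Pc" "valid_pstring n Pd"
    and "anticommute n Pa Pb"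
    and "circuit_on n C'" and "q < n"
    and "supported_in n (conj_circ C' Pa) {q}"
    and "supported_in n (conj_circ C' Pb) {q}"
  shows
    "let aac = anticommute n Pa Pc; abc = anticommute n Pb Pc;
         aad = anticommute n Pa Pd; abd = anticommute n Pb Pd;
         acd = anticommute n Pc Pd;
         beta = ((aac, abc) \<noteq> (False, False) \<and> (aad, abd) \<noteq> (False, False)
                 \<and> (aac, abc) \<noteq> (aad, abd))
     in (anticommute n (rest_off q (conj_circ C' Pc)) (rest_off q (conj_circ C' Pd))
           \<longleftrightarrow> (acd \<noteq> beta))
      \<and> ((acd \<noteq> beta) \<longleftrightarrow>
           (b2n aac, b2n abc, b2n aad, b2n abd, b2n acd) \<in>
             {(0,0,0,0,1),(0,0,0,1,1),(0,0,1,0,1),(0,0,1,1,1),(0,1,0,0,1),(0,1,0,1,1),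
              (0,1,1,0,0),(0,1,1,1,0),(1,0,0,0,1),(1,0,0,1,0),(1,0,1,0,1),(1,0,1,1,0),
              (1,1,0,0,1),(1,1,0,1,0),(1,1,1,0,0),(1,1,1,1,1)})
      \<and> ((acd \<noteq> beta) \<longrightarrow>
           (\<exists>C q1 q2. circuit_on n C \<and> q1 < n \<and> q2 < n \<and> q1 \<noteq> q2 \<and>
              supported_in n (conj_circ C Pa) {q1, q2} \<and>
              supported_in n (conj_circ C Pb) {q1, q2} \<and>
              supported_in n (conj_circ C Pc) {q1, q2} \<and>
              supported_in n (conj_circ C Pd) {q1, q2}))"
proof -
  define T where "T = {..<n} - {q}"
  have finT: "finite T" by (simp add: T_def)
  have qn: "q < n" by fact
  have cC': "cin {..<n} C'" using assms(7) by (simp add: circuit_on_cin)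
  have pres: "anticommute n X Y \<longleftrightarrow> odd (acs {..<n} (conj_circ C' X) (conj_circ C' Y))" for X Y
    using acs_circ[OF _ cC'] anticommute_iff by simp
  define a' where "a' = conj_circ C' Pa"
  define b' where "b' = conj_circ C' Pb"
  define c' where "c' = conj_circ C' Pc"
  define d' where "d' = conj_circ C' Pd"
  have sa: "\<forall>j\<in>{..<n}-{q}. op a' j = PI" using assms(9) by (auto simp: supported_in_def a'_def)
  have sb: "\<forall>j\<in>{..<n}-{q}. op b' j = PI" using assms(10) by (auto simp: supported_in_def b'_def)
  have ob: "odd (b2n x) = x" for x by (simp add: b2n_def)
  have F: "anticommute n Pa X \<longleftrightarrow> ac1 (op a' q) (op (conj_circ C' X) q)" for X
    using pres[of Pa X] acs_single[OF _ _ sa] qn ob unfolding a'_def by simp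
  have G: "anticommute n Pb X \<longleftrightarrow> ac1 (op b' q) (op (conj_circ C' X) q)" for X
    using pres[of Pb X] acs_single[OF _ _ sb] qn ob unfolding b'_def by simp
  have ab: "ac1 (op a' q) (op b' q)" using F[of Pb] assms(6) b'_def by simp
  have H: "anticommute n Pc Pd \<longleftrightarrow> (ac1 (op c' q) (op d' q) \<noteq> odd (acs T c' d'))"
    using pres[of Pc Pd] acs_split[OF qn, of c' d'] unfolding c'_def d'_def T_def
    by (simp add: b2n_def)
  have R: "anticommute n (rest_off q c') (rest_off q d') \<longleftrightarrow> odd (acs T c' d')"
    using anticommute_iff acs_rest[OF qn] T_def by simp
  have ex: "\<exists>C q1 q2. circuit_on n C \<and> q1 < n \<and> q2 < n \<and> q1 \<noteq> q2 \<and>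
              supported_in n (conj_circ C Pa) {q1, q2} \<and>
              supported_in n (conj_circ C Pb) {q1, q2} \<and>
              supported_in n (conj_circ C Pc) {q1, q2} \<and>
              supported_in n (conj_circ C Pd) {q1, q2}" if od: "odd (acs T c' d')"
  proof -
    obtain C2 k where C2: "cin T C2" "k \<in> T"
      "\<forall>j\<in>T-{k}. op (conj_circ C2 c') j = PI \<and> op (conj_circ C2 d') j = PI"
      using reduce[OF finT od] by blast
    have TU: "T \<subseteq> {..<n}" by (auto simp: T_def)
    have ta: "op (conj_circ C2 a') = op a'" using op_triv[OF C2(1)] sa T_def by simp
    have tb: "op (conj_circ C2 b') = op b'" using op_triv[OF C2(1)] sb T_def by simp
    show ?thesis
    proof (rule exI[of _ "C' @ C2"], rule exI[of _ q], rule exI[of _ k], intro conjI)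
      show "circuit_on n (C' @ C2)" using cC' cin_mono[OF C2(1) TU] by (simp add: circuit_on_cin)
      show "q < n" by fact
      show "k < n" "q \<noteq> k" using C2(2) by (auto simp: T_def)
      show "supported_in n (conj_circ (C' @ C2) Pa) {q, k}"
        using ta sa unfolding supported_in_def a'_def by auto
      show "supported_in n (conj_circ (C' @ C2) Pb) {q, k}"
        using tb sb unfolding supported_in_def b'_def by auto
      show "supported_in n (conj_circ (C' @ C2) Pc) {q, k}"
        using C2(3) unfolding supported_in_def c'_def T_def by auto
      show "supported_in n (conj_circ (C' @ C2) Pd) {q, k}"
        using C2(3) unfolding supported_in_def d'_def T_def by auto
    qed
  qed
  show ?thesis
    unfolding F G H
    unfolding c'_def[symmetric] d'_def[symmetric] R
    by (rule bool_fact[OF ab ex])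
qed

end
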